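(* If $\Lambda$ is a quotient group of a group $\Gamma$, then $\mathrm{Lit}(\Lambda)\le\mathrm{Lit}(\Gamma)$.
   Context: $T_1(\Gamma)$ is the space of all $f\colon\Gamma\to\mathbf{C}$ for which there exist $f_1,f_2\colon\Gamma\times\Gamma\to\mathbf{C}$ with $f(x^{-1}y)=f_1(x,y)+f_2(x,y)$ for all $x,y$, $\sup_x\sum_y|f_1(x,y)|<\infty$, $\sup_y\sum_x|f_2(x,y)|<\infty$; $\mathrm{Lit}(\Gamma)=\inf\{p>0:T_1(\Gamma)\subseteq\ell^p(\Gamma)\}\in[0,\infty]$. *)

theory Defs
  imports "HOL-Analysis.Analysis" "HOL-Algebra.Group"
begin

definition T1 :: "('a, 'b) monoid_scheme \<Rightarrow> ('a \<Rightarrow> complex) set" where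
  "T1 G = {f. \<exists>f1 f2 :: 'a \<Rightarrow> 'a \<Rightarrow> complex.
      (\<forall>x\<in>carrier G. \<forall>y\<in>carrier G. f (inv\<^bsub>G\<^esub> x \<otimes>\<^bsub>G\<^esub> y) = f1 x y + f2 x y) \<and>
      (SUP x\<in>carrier G. \<Sum>\<^sub>\<infinity>y\<in>carrier G. ennreal (norm (f1 x y))) < \<infinity> \<and>
      (SUP y\<in>carrier G. \<Sum>\<^sub>\<infinity>x\<in>carrier G. ennreal (norm (f2 x y))) < \<infinity>}"

definition lp :: "('a, 'b) monoid_scheme \<Rightarrow> real \<Rightarrow> ('a \<Rightarrow> complex) set" where
  "lp G p = {f. (\<Sum>\<^sub>\<infinity>x\<in>carrier G. ennreal (norm (f x) powr p)) < \<infinity>}"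

text \<open>Lit(G) = inf {p > 0. T1(G) \<subseteq> ell^p(G)} in [0, infinity] (empty inf = infinity).\<close>
definition Lit :: "('a, 'b) monoid_scheme \<Rightarrow> ennreal" where
  "Lit G = (INF p\<in>{p::real. p > 0 \<and> T1 G \<subseteq> lp G p}. ennreal p)"

end

theory Submission
  imports Defs
begin

lemma ennreal_infsum_inj_le:
  fixes g :: "'b \<Rightarrow> ennreal"
  assumes "inj_on h A" "h ` A \<subseteq> B"
  shows "(\<Sum>\<^sub>\<infinity>y\<in>A. g (h y)) \<le> (\<Sum>\<^sub>\<infinity>z\<in>B. g z)"
proof -
  have "(\<Sum>\<^sub>\<infinity>y\<in>A. g (h y)) = (\<Sum>\<^sub>\<infinity>z\<in>h ` A. g z)"
    using infsum_reindex[OF assms(1), of g] by (simp add: o_def)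
  also have "\<dots> \<le> (\<Sum>\<^sub>\<infinity>z\<in>B. g z)"
    by (rule infsum_mono_neutral) (use assms(2) in \<open>auto intro: nonneg_summable_on_complete\<close>)
  finally show ?thesis .
qed

lemma transfer_T1:
  assumes gh: "group_hom G H h" and surj: "h ` carrier G = carrier H"
    and sub: "T1 G \<subseteq> lp G p"
  shows "T1 H \<subseteq> lp H p"
proof
  interpret group_hom G H h by (rule gh)
  fix f assume "f \<in> T1 H"
  then obtain f1 f2 where dec: "\<forall>x\<in>carrier H. \<forall>y\<in>carrier H. f (inv\<^bsub>H\<^esub> x \<otimes>\<^bsub>H\<^esub> y) = f1 x y + f2 x y"
    and b1: "(SUP x\<in>carrier H. \<Sum>\<^sub>\<infinity>y\<in>carrier H. ennreal (norm (f1 x y))) < \<infinity>"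
    and b2: "(SUP y\<in>carrier H. \<Sum>\<^sub>\<infinity>x\<in>carrier H. ennreal (norm (f2 x y))) < \<infinity>"
    unfolding T1_def by blast
  define s where "s = inv_into (carrier G) h"
  have s_in: "s l \<in> carrier G" and hs: "h (s l) = l" if "l \<in> carrier H" for l
    using that surj unfolding s_def by (auto intro: inv_into_into f_inv_into_f)
  define S where "S = s ` carrier H"
  have SG: "S \<subseteq> carrier G" using s_in S_def by auto
  have injS: "inj_on h S"
    unfolding S_def inj_on_def using hs by auto
  have hS: "h ` S = carrier H"
    unfolding S_def image_image using hs by auto
  define F where "F g = (if g \<in> S then f (h g) else 0)" for g
  define F1 where "F1 x y = (if inv\<^bsub>G\<^esub> x \<otimes>\<^bsub>G\<^esub> y \<in> S then f1 (h x) (h y) else 0)" for x y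
  define F2 where "F2 x y = (if inv\<^bsub>G\<^esub> x \<otimes>\<^bsub>G\<^esub> y \<in> S then f2 (h x) (h y) else 0)" for x y
  have "F \<in> T1 G"
    unfolding T1_def
  proof (intro CollectI exI conjI ballI)
    fix x y assume xy: "x \<in> carrier G" "y \<in> carrier G"
    then show "F (inv\<^bsub>G\<^esub> x \<otimes>\<^bsub>G\<^esub> y) = F1 x y + F2 x y"
      unfolding F_def F1_def F2_def using dec by auto
  next
    have le1: "(\<Sum>\<^sub>\<infinity>y\<in>carrier G. ennreal (norm (F1 x y))) \<le> (\<Sum>\<^sub>\<infinity>y\<in>carrier H. ennreal (norm (f1 (h x) y)))"
      if x: "x \<in> carrier G" for x
    proof -
      define A where "A = {y\<in>carrier G. inv\<^bsub>G\<^esub> x \<otimes>\<^bsub>G\<^esub> y \<in> S}"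
      have "(\<Sum>\<^sub>\<infinity>y\<in>carrier G. ennreal (norm (F1 x y))) = (\<Sum>\<^sub>\<infinity>y\<in>A. ennreal (norm (f1 (h x) (h y))))"
        by (rule infsum_cong_neutral) (auto simp: A_def F1_def)
      also have "\<dots> \<le> (\<Sum>\<^sub>\<infinity>y\<in>carrier H. ennreal (norm (f1 (h x) y)))"
      proof (rule ennreal_infsum_inj_le)
        show "inj_on h A"
        proof (rule inj_onI)
          fix a b assume ab: "a \<in> A" "b \<in> A" "h a = h b"
          then have "h (inv\<^bsub>G\<^esub> x \<otimes>\<^bsub>G\<^esub> a) = h (inv\<^bsub>G\<^esub> x \<otimes>\<^bsub>G\<^esub> b)" using x by (simp add: A_def)
          then have "inv\<^bsub>G\<^esub> x \<otimes>\<^bsub>G\<^esub> a = inv\<^bsub>G\<^esub> x \<otimes>\<^bsub>G\<^esub> b" using injS ab(1,2) by (auto simp: A_def inj_on_def)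
          then show "a = b" using ab x by (auto simp: A_def)
        qed
        show "h ` A \<subseteq> carrier H" by (auto simp: A_def)
      qed
      finally show ?thesis .
    qed
    have "(SUP x\<in>carrier G. \<Sum>\<^sub>\<infinity>y\<in>carrier G. ennreal (norm (F1 x y)))
        \<le> (SUP x\<in>carrier H. \<Sum>\<^sub>\<infinity>y\<in>carrier H. ennreal (norm (f1 x y)))"
      by (intro SUP_least) (metis le1 SUP_upper2 hom_closed)
    then show "(SUP x\<in>carrier G. \<Sum>\<^sub>\<infinity>y\<in>carrier G. ennreal (norm (F1 x y))) < \<infinity>"
      using b1 by (rule le_less_trans)
  next
    have le2: "(\<Sum>\<^sub>\<infinity>x\<in>carrier G. ennreal (norm (F2 x y))) \<le> (\<Sum>\<^sub>\<infinity>x\<in>carrier H. ennreal (norm (f2 x (h y))))"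
      if y: "y \<in> carrier G" for y
    proof -
      define A where "A = {x\<in>carrier G. inv\<^bsub>G\<^esub> x \<otimes>\<^bsub>G\<^esub> y \<in> S}"
      have "(\<Sum>\<^sub>\<infinity>x\<in>carrier G. ennreal (norm (F2 x y))) = (\<Sum>\<^sub>\<infinity>x\<in>A. ennreal (norm (f2 (h x) (h y))))"
        by (rule infsum_cong_neutral) (auto simp: A_def F2_def)
      also have "\<dots> \<le> (\<Sum>\<^sub>\<infinity>x\<in>carrier H. ennreal (norm (f2 x (h y))))"
      proof (rule ennreal_infsum_inj_le[where g="\<lambda>x. ennreal (norm (f2 x (h y)))"])
        show "inj_on h A"
        proof (rule inj_onI)
          fix a b assume ab: "a \<in> A" "b \<in> A" "h a = h b"
          then have "h (inv\<^bsub>G\<^esub> a \<otimes>\<^bsub>G\<^esub> y) = h (inv\<^bsub>G\<^esub> b \<otimes>\<^bsub>G\<^esub> y)" using y by (simp add: A_def)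
          then have "inv\<^bsub>G\<^esub> a \<otimes>\<^bsub>G\<^esub> y = inv\<^bsub>G\<^esub> b \<otimes>\<^bsub>G\<^esub> y" using injS ab(1,2) by (auto simp: A_def inj_on_def)
          then show "a = b" using ab y by (auto simp: A_def) (metis G.inv_inv)
        qed
        show "h ` A \<subseteq> carrier H" by (auto simp: A_def)
      qed
      finally show ?thesis .
    qed
    have "(SUP y\<in>carrier G. \<Sum>\<^sub>\<infinity>x\<in>carrier G. ennreal (norm (F2 x y)))
        \<le> (SUP y\<in>carrier H. \<Sum>\<^sub>\<infinity>x\<in>carrier H. ennreal (norm (f2 x y)))"
      by (intro SUP_least) (metis le2 SUP_upper2 hom_closed)
    then show "(SUP y\<in>carrier G. \<Sum>\<^sub>\<infinity>x\<in>carrier G. ennreal (norm (F2 x y))) < \<infinity>"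
      using b2 by (rule le_less_trans)
  qed
  then have "F \<in> lp G p" using sub by blast
  then have fin: "(\<Sum>\<^sub>\<infinity>g\<in>carrier G. ennreal (norm (F g) powr p)) < \<infinity>"
    unfolding lp_def by simp
  have "(\<Sum>\<^sub>\<infinity>g\<in>carrier G. ennreal (norm (F g) powr p)) = (\<Sum>\<^sub>\<infinity>g\<in>S. ennreal (norm (f (h g)) powr p))"
    by (rule infsum_cong_neutral) (use SG in \<open>auto simp: F_def\<close>)
  also have "\<dots> = (\<Sum>\<^sub>\<infinity>l\<in>carrier H. ennreal (norm (f l) powr p))"
    using infsum_reindex[OF injS, of "\<lambda>l. ennreal (norm (f l) powr p)"] hS by (simp add: o_def)
  finally show "f \<in> lp H p" using fin unfolding lp_def by simp
qed

theorem proposition3p5: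
  fixes G :: "('a, 'c) monoid_scheme" and H :: "('b, 'd) monoid_scheme"
  assumes "group G" and "group H"
    and "h \<in> hom G H" and "h ` carrier G = carrier H"
  shows "Lit H \<le> Lit G"
proof -
  have gh: "group_hom G H h" using assms by (simp add: group_hom_def group_hom_axioms_def)
  have "{p::real. p > 0 \<and> T1 G \<subseteq> lp G p} \<subseteq> {p::real. p > 0 \<and> T1 H \<subseteq> lp H p}"
    using transfer_T1[OF gh assms(4)] by blast
  then show ?thesis unfolding Lit_def by (rule INF_superset_mono) simp
qed

end
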